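(* For every real $\alpha$ with $0\le\alpha<8$, all Fourier coefficients of $E_2^{(4)}(\tau)-\alpha\Delta_2^{(4)}(\tau)$ (i.e. the coefficients of $q^n$ for all $n\ge0$) are positive.
   Context: $q=e^{2\pi i\tau}$, $\tau\in\mathfrak H$. $E_2(\tau)=1-24\sum_{n\ge1}\sigma(n)q^n$ with $\sigma(n)=\sum_{d\mid n}d$; $E_2^{(4)}(\tau)=\frac13(4E_2(4\tau)-E_2(\tau))$; $\Delta_2^{(4)}(\tau)=\eta(4\tau)^8/\eta(2\tau)^4=\sum_{n\ge1,\ n\text{ odd}}\sigma(n)q^n$, where $\eta(\tau)=q^{1/24}\prod_{n\ge1}(1-q^n)$. *)

theory Defs
  imports Complex_Main "HOL-Computational_Algebra.Formal_Power_Series"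
begin

(* q-expansions are modelled as formal power series in q with real coefficients *)

definition sigma1 :: "nat \<Rightarrow> nat" where
  "sigma1 n = (\<Sum>d\<in>{d. d dvd n}. d)"

definition E2 :: "real fps" where
  "E2 = Abs_fps (\<lambda>n. if n = 0 then 1 else - 24 * real (sigma1 n))"

definition E2_at4 :: "real fps" where
  "E2_at4 = fps_compose E2 (fps_X ^ 4)"

definition E2_4 :: "real fps" where
  "E2_4 = fps_const (1/3) * (fps_const 4 * E2_at4 - E2)"

(* Delta_2^{(4)}(tau) = eta(4tau)^8/eta(2tau)^4 = sum_{n odd} sigma(n) q^n *)
definition Delta2_4 :: "real fps" where
  "Delta2_4 = Abs_fps (\<lambda>n. if odd n then real (sigma1 n) else 0)"

end

theory Submission
  imports Defs
begin

lemma E2_at4_nth: "fps_nth (E2_at4) n = (if 4 dvd n then fps_nth E2 (n div 4) else 0)"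
proof -
  have "fps_nth (E2_at4) n = (\<Sum>i\<in>{0..n}. fps_nth E2 i * (if n = 4 * i then 1 else 0))"
    unfolding E2_at4_def fps_compose_nth by (simp add: power_mult[symmetric])
  also have "\<dots> = (\<Sum>i\<in>{0..n}. if i = n div 4 \<and> 4 dvd n then fps_nth E2 i else 0)"
    by (rule sum.cong) auto
  also have "\<dots> = (if 4 dvd n then fps_nth E2 (n div 4) else 0)"
    by (simp add: sum.delta' )
  finally show ?thesis .
qed

lemma sigma1_pos: "n > 0 \<Longrightarrow> sigma1 n \<ge> 1"
  unfolding sigma1_def
  using member_le_sum[of 1 "{d. d dvd n}" "\<lambda>d. d"] finite_divisors_nat[of n]
  by auto

lemma sigma1_4: assumes "m > 0" shows "sigma1 (4*m) \<ge> 4 * sigma1 m + 1"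
proof -
  have fin: "finite {d. d dvd 4*m}" using assms by (simp add: finite_divisors_nat)
  have finm: "finite {d. d dvd m}" using assms by (simp add: finite_divisors_nat)
  have sub: "insert 1 ((*) 4 ` {d. d dvd m}) \<subseteq> {d. d dvd 4*m}" by auto
  have notin: "1 \<notin> (*) (4::nat) ` {d. d dvd m}" by auto
  have "sum (\<lambda>d. d) (insert 1 ((*) 4 ` {d. d dvd m})) = 1 + sum (\<lambda>d. d) ((*) (4::nat) ` {d. d dvd m})"
    using notin finm by simp
  also have "sum (\<lambda>d. d) ((*) (4::nat) ` {d. d dvd m}) = sum (\<lambda>d. 4 * d) {d. d dvd m}"
    by (subst sum.reindex) (auto simp: inj_on_def)
  also have "\<dots> = 4 * sigma1 m" by (simp add: sigma1_def sum_distrib_left)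
  finally have "sum (\<lambda>d. d) (insert 1 ((*) 4 ` {d. d dvd m})) = 4 * sigma1 m + 1" by simp
  moreover have "sum (\<lambda>d. d) (insert 1 ((*) 4 ` {d. d dvd m})) \<le> sigma1 (4*m)"
    unfolding sigma1_def by (rule sum_mono2[OF fin sub]) auto
  ultimately show ?thesis by simp
qed


lemma c: "fps_nth (E2_4 - fps_const \<alpha> * Delta2_4) n =
     (4 * fps_nth (E2_at4) n - fps_nth (E2) n) / 3 - \<alpha> * fps_nth (Delta2_4) n"
    by (simp add: E2_4_def)
lemma c0: "fps_nth (E2_4 - fps_const \<alpha> * Delta2_4) 0 > 0"
  unfolding c by (simp add: E2_at4_nth E2_def Delta2_4_def)

lemma codd: assumes "odd n" "\<alpha> < 8" shows "fps_nth (E2_4 - fps_const \<alpha> * Delta2_4) n > 0"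
proof -
  have n: "n > 0" "\<not> 4 dvd n" using assms(1) by (auto intro: Nat.gr0I)
  have s: "real (sigma1 n) \<ge> 1" using sigma1_pos[OF n(1)] by simp
  have "fps_nth (E2_4 - fps_const \<alpha> * Delta2_4) n = (8 - \<alpha>) * real (sigma1 n)"
    unfolding c using n assms(1) by (simp add: E2_at4_nth E2_def Delta2_4_def algebra_simps)
  also have "\<dots> > 0" using s assms(2) by simp
  finally show ?thesis .
qed
lemma cev: assumes "even n" "n > 0" "\<not> 4 dvd n" shows "fps_nth (E2_4 - fps_const \<alpha> * Delta2_4) n > 0"
proof -
  have s: "real (sigma1 n) \<ge> 1" using sigma1_pos[OF assms(2)] by simp
  have "fps_nth (E2_4 - fps_const \<alpha> * Delta2_4) n = 8 * real (sigma1 n)"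
    unfolding c using assms by (simp add: E2_at4_nth E2_def Delta2_4_def algebra_simps)
  also have "\<dots> > 0" using s by simp
  finally show ?thesis .
qed
lemma c4: assumes "m > 0" shows "fps_nth (E2_4 - fps_const \<alpha> * Delta2_4) (4*m) > 0"
proof -
  have s: "real (sigma1 (4*m)) \<ge> 4 * real (sigma1 m) + 1"
  proof -
    have "real (4 * sigma1 m + 1) \<le> real (sigma1 (4*m))" using sigma1_4[OF assms] by linarith
    then show ?thesis by simp
  qed
  have "fps_nth (E2_4 - fps_const \<alpha> * Delta2_4) (4*m) = 8 * real (sigma1 (4*m)) - 32 * real (sigma1 m)"
    unfolding c using assms by (simp add: E2_at4_nth E2_def Delta2_4_def field_simps)
  also have "\<dots> > 0" using s by simp
  finally show ?thesis .
qed

theorem mainTheorem7: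
  fixes \<alpha> :: real
  assumes "0 \<le> \<alpha>" and "\<alpha> < 8"
  shows "\<forall>n::nat. fps_nth (E2_4 - fps_const \<alpha> * Delta2_4) n > 0"
proof
  fix n :: nat
  show "fps_nth (E2_4 - fps_const \<alpha> * Delta2_4) n > 0"
  proof (cases "n = 0")
    case True then show ?thesis using c0 by simp
  next
    case False
    show ?thesis
    proof (cases "4 dvd n")
      case True
      then obtain m where m: "n = 4*m" by auto
      with False have "m > 0" by simp
      then show ?thesis using c4 m by simp
    next
      case nd: False
      show ?thesis
      proof (cases "odd n")
        case True then show ?thesis using codd assms(2) by blast
      next
        case ev: False then show ?thesis using cev nd False by blast
      qed
    qed
  qed
qed

end
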